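(* Let $X,Y\subset\mathbb{R}^d$ be bounded open sets with $X$ connected, and let $c:X\times Y\to\mathbb{R}$ be bounded from below and admit a modulus of continuity. Let $a\in\mathbb{R}$ and let $\psi$ be a subharmonic function on $X$ with values in $[a,\infty)$. Then $$Q_{\bar c}(\psi)=Q_{\bar c}\big(Q_{ce}(Q_{\bar c}(\psi))\big)\quad\text{and}\quad Q_{ce}(\psi)=Q_{ce}\big(Q_{\bar c}(Q_{ce}(\psi))\big).$$
   Context: For $g$ on $Y$: $Q_c(g)(x)=\inf_{y\in Y}\{g(y)+c(x,y)\}$ for $x\in X$; for $g$ on $X$: $Q_{\bar c}(g)(y)=\sup_{x\in X}\{g(x)-c(x,y)\}$ for $y\in Y$ (extended-real valued). For a function $g$ on $X$, its subharmonic envelope is $g_e=\sup\{\phi:\phi\text{ subharmonic on }X,\ \phi\le g\}$, and $Q_{ce}(g):=(Q_c(g))_e$. A function is subharmonic on $X$ if it is upper semicontinuous with values in $[-\infty,\infty)$ and satisfies the sub-mean-value inequality on every sphere whose ball lies in $X$. *)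

theory Defs
  imports "HOL-Analysis.Analysis"
begin

definition has_modulus_of_continuity ::
  "'a::euclidean_space set \<Rightarrow> 'a set \<Rightarrow> ('a \<Rightarrow> 'a \<Rightarrow> real) \<Rightarrow> bool" where
  "has_modulus_of_continuity X Y c \<longleftrightarrow>
     (\<exists>\<omega>::real \<Rightarrow> real. (\<omega> \<longlongrightarrow> 0) (at_right 0) \<and>
        (\<forall>x\<in>X. \<forall>x'\<in>X. \<forall>y\<in>Y. \<forall>y'\<in>Y.
           \<bar>c x y - c x' y'\<bar> \<le> \<omega> (dist x x' + dist y y')))"

definition Qc :: "'a set \<Rightarrow> ('a \<Rightarrow> 'a \<Rightarrow> real) \<Rightarrow> ('a \<Rightarrow> ereal) \<Rightarrow> 'a \<Rightarrow> ereal" where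
  "Qc Y c g x = (INF y\<in>Y. g y + ereal (c x y))"

definition Qcbar :: "'a set \<Rightarrow> ('a \<Rightarrow> 'a \<Rightarrow> real) \<Rightarrow> ('a \<Rightarrow> ereal) \<Rightarrow> 'a \<Rightarrow> ereal" where
  "Qcbar X c g y = (SUP x\<in>X. g x - ereal (c x y))"

definition usc_on :: "'a::topological_space set \<Rightarrow> ('a \<Rightarrow> ereal) \<Rightarrow> bool" where
  "usc_on X f \<longleftrightarrow> (\<forall>x\<in>X. \<forall>t. f x < t \<longrightarrow> eventually (\<lambda>y. f y < t) (at x within X))"

text \<open>Integral of f over the sphere of centre x and radius r with respect to the surface
  measure normalised to total mass vol(unit ball), i.e. the push-forward of Lebesgue measure
  on the unit ball under radial projection (this is the normalised surface measure).\<close>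
definition sphere_integral :: "('a::euclidean_space \<Rightarrow> ereal) \<Rightarrow> 'a \<Rightarrow> real \<Rightarrow> ereal" where
  "sphere_integral f x r =
     enn2ereal (\<integral>\<^sup>+ z. indicator (ball 0 1) z * e2ennreal (f (x + r *\<^sub>R (z /\<^sub>R norm z))) \<partial>lborel)
   - enn2ereal (\<integral>\<^sup>+ z. indicator (ball 0 1) z * e2ennreal (- f (x + r *\<^sub>R (z /\<^sub>R norm z))) \<partial>lborel)"

definition sphere_mean :: "('a::euclidean_space \<Rightarrow> ereal) \<Rightarrow> 'a \<Rightarrow> real \<Rightarrow> ereal" where
  "sphere_mean f x r = sphere_integral f x r / ereal (measure lborel (ball (0::'a) 1))"

definition subharmonic_on :: "'a::euclidean_space set \<Rightarrow> ('a \<Rightarrow> ereal) \<Rightarrow> bool" where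
  "subharmonic_on X \<phi> \<longleftrightarrow> usc_on X \<phi> \<and> (\<forall>x\<in>X. \<phi> x \<noteq> \<infinity>) \<and>
     (\<forall>x r. 0 < r \<and> cball x r \<subseteq> X \<longrightarrow> \<phi> x \<le> sphere_mean \<phi> x r)"

definition subharmonic_envelope :: "'a::euclidean_space set \<Rightarrow> ('a \<Rightarrow> ereal) \<Rightarrow> 'a \<Rightarrow> ereal" where
  "subharmonic_envelope X g x =
     (SUP \<phi>\<in>{\<phi>. subharmonic_on X \<phi> \<and> (\<forall>z\<in>X. \<phi> z \<le> g z)}. \<phi> x)"

definition Qce :: "'a::euclidean_space set \<Rightarrow> 'a set \<Rightarrow> ('a \<Rightarrow> 'a \<Rightarrow> real) \<Rightarrow> ('a \<Rightarrow> ereal) \<Rightarrow> 'a \<Rightarrow> ereal" where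
  "Qce X Y c g = subharmonic_envelope X (Qc Y c g)"

end

theory Submission
  imports Defs
begin

lemma unit_le:
  assumes "x \<in> X"
  shows "h x \<le> Qc Y c (Qcbar X c h) x"
  unfolding Qc_def
proof (rule INF_greatest)
  fix y assume "y \<in> Y"
  have "h x - ereal (c x y) \<le> Qcbar X c h y"
    unfolding Qcbar_def using assms by (rule SUP_upper)
  hence "h x - ereal (c x y) + ereal (c x y) \<le> Qcbar X c h y + ereal (c x y)"
    by (rule add_right_mono)
  moreover have "h x - ereal (c x y) + ereal (c x y) = h x"
    by (cases "h x") auto
  ultimately show "h x \<le> Qcbar X c h y + ereal (c x y)" by simp
qed

lemma counit_le:
  assumes "y \<in> Y"
  shows "Qcbar X c (Qc Y c g) y \<le> g y"
  unfolding Qcbar_def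
proof (rule SUP_least)
  fix x assume "x \<in> X"
  have "Qc Y c g x \<le> g y + ereal (c x y)"
    unfolding Qc_def using assms by (rule INF_lower)
  hence "Qc Y c g x - ereal (c x y) \<le> g y + ereal (c x y) - ereal (c x y)"
    by (simp add: ereal_minus_mono)
  moreover have "g y + ereal (c x y) - ereal (c x y) = g y"
    by (cases "g y") auto
  ultimately show "Qc Y c g x - ereal (c x y) \<le> g y" by simp
qed

lemma Qcbar_mono:
  assumes "\<And>x. x \<in> X \<Longrightarrow> h x \<le> h' x"
  shows "Qcbar X c h y \<le> Qcbar X c h' y"
  unfolding Qcbar_def
  by (rule SUP_mono) (use assms in \<open>auto intro!: bexI ereal_minus_mono\<close>)

lemma Qc_mono:
  assumes "\<And>y. y \<in> Y \<Longrightarrow> g y \<le> g' y"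
  shows "Qc Y c g x \<le> Qc Y c g' x"
  unfolding Qc_def
  by (rule INF_mono) (use assms in \<open>auto intro!: bexI add_right_mono\<close>)

lemma env_le:
  assumes "x \<in> X"
  shows "subharmonic_envelope X g x \<le> g x"
  unfolding subharmonic_envelope_def
  by (rule SUP_least) (use assms in auto)

lemma env_upper:
  assumes "subharmonic_on X \<phi>" "\<And>z. z \<in> X \<Longrightarrow> \<phi> z \<le> g z"
  shows "\<phi> x \<le> subharmonic_envelope X g x"
  unfolding subharmonic_envelope_def
  by (rule SUP_upper) (use assms in auto)

lemma env_mono:
  assumes "\<And>z. z \<in> X \<Longrightarrow> g z \<le> g' z"
  shows "subharmonic_envelope X g x \<le> subharmonic_envelope X g' x"
  unfolding subharmonic_envelope_def
  by (rule SUP_subset_mono) (use assms in \<open>auto intro: order_trans\<close>)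

theorem mainTheorem17:
  fixes X Y :: "'a::euclidean_space set" and c :: "'a \<Rightarrow> 'a \<Rightarrow> real"
    and \<psi> :: "'a \<Rightarrow> ereal" and a :: real
  assumes "open X" "bounded X" "connected X" "open Y" "bounded Y"
    and "\<exists>m. \<forall>x\<in>X. \<forall>y\<in>Y. m \<le> c x y"
    and "has_modulus_of_continuity X Y c"
    and "subharmonic_on X \<psi>"
    and "\<forall>x\<in>X. ereal a \<le> \<psi> x"
  shows "(\<forall>y\<in>Y. Qcbar X c \<psi> y = Qcbar X c (Qce X Y c (Qcbar X c \<psi>)) y) \<and>
         (\<forall>x\<in>X. Qce X Y c \<psi> x = Qce X Y c (Qcbar X c (Qce X Y c \<psi>)) x)"
proof (intro conjI ballI)
  fix y assume y: "y \<in> Y"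
  let ?S = "Qcbar X c \<psi>"
  have A: "\<psi> x \<le> Qce X Y c ?S x" if "x \<in> X" for x
    unfolding Qce_def
    by (rule env_upper[OF assms(8)]) (rule unit_le)
  have B: "Qce X Y c ?S x \<le> Qc Y c ?S x" if "x \<in> X" for x
    unfolding Qce_def using that by (rule env_le)
  have "?S y \<le> Qcbar X c (Qce X Y c ?S) y" by (rule Qcbar_mono) (rule A)
  moreover have "Qcbar X c (Qce X Y c ?S) y \<le> Qcbar X c (Qc Y c ?S) y"
    by (rule Qcbar_mono) (rule B)
  moreover have "Qcbar X c (Qc Y c ?S) y \<le> ?S y" using y by (rule counit_le)
  ultimately show "?S y = Qcbar X c (Qce X Y c ?S) y" by (meson antisym order_trans)
next
  fix x assume x: "x \<in> X"
  let ?u = "Qce X Y c \<psi>"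
  have Su: "Qcbar X c ?u y \<le> \<psi> y" if "y \<in> Y" for y
  proof -
    have "Qcbar X c ?u y \<le> Qcbar X c (Qc Y c \<psi>) y"
      by (rule Qcbar_mono) (unfold Qce_def, rule env_le)
    also have "\<dots> \<le> \<psi> y" using that by (rule counit_le)
    finally show ?thesis .
  qed
  have 1: "Qce X Y c (Qcbar X c ?u) x \<le> ?u x"
    unfolding Qce_def by (rule env_mono, rule Qc_mono, rule Su[unfolded Qce_def])
  have 2: "?u x \<le> Qce X Y c (Qcbar X c ?u) x"
  proof -
  define R where "R = Qce X Y c (Qcbar X c ?u) x"
  have "?u x \<le> R"
    unfolding Qce_def[of X Y c \<psi>] subharmonic_envelope_def
  proof (rule SUP_least)
    fix \<phi> assume "\<phi> \<in> {\<phi>. subharmonic_on X \<phi> \<and> (\<forall>z\<in>X. \<phi> z \<le> Qc Y c \<psi> z)}"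
    hence sh: "subharmonic_on X \<phi>" and le: "\<forall>z\<in>X. \<phi> z \<le> Qc Y c \<psi> z" by auto
    have phiu: "\<phi> z \<le> ?u z" for z
      unfolding Qce_def by (rule env_upper[OF sh]) (use le in auto)
    show "\<phi> x \<le> R"
      unfolding R_def Qce_def[of X Y c "Qcbar X c ?u"]
    proof (rule env_upper[OF sh])
      fix z assume z: "z \<in> X"
      have "\<phi> z \<le> Qc Y c (Qcbar X c \<phi>) z" using z by (rule unit_le)
      also have "\<dots> \<le> Qc Y c (Qcbar X c ?u) z"
        by (rule Qc_mono, rule Qcbar_mono, rule phiu)
      finally show "\<phi> z \<le> Qc Y c (Qcbar X c ?u) z" .
    qed
  qed
  thus ?thesis by (simp add: R_def)
  qed
  show "?u x = Qce X Y c (Qcbar X c ?u) x" by (rule antisym[OF 2 1])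
qed

end
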